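(* Let $n$ be a positive odd integer and let $s$ be an integer with $0\leqslant s\leqslant (n-1)/2$. Then $$ \sum_{k=0}^{(n-1)/2}\frac{(aq;q^2)_k\,(q/a;q^2)_{k+s}}{(q^2;q^2)_k\,(q^2;q^2)_{k+s} } \equiv (-1)^{(n-1)/2}q^{(1-n^2)/4}\pmod{(1-aq^n)(a-q^n)}. $$
   Context: $a,q$ are indeterminates. The $q$-shifted factorial is $(y;q)_0=1$ and $(y;q)_m=(1-y)(1-yq)\cdots(1-yq^{m-1})$ for $m\geqslant1$. For rational functions $A,B$ and a polynomial $P$, $A\equiv B\pmod P$ means $A-B=P\cdot C/D$ for polynomials $C,D$ with $D$ coprime to $P$. *)

theory Defs
  imports "HOL-Computational_Algebra.Computational_Algebra"
begin

text \<open>Bivariate polynomials Q[q][a]: outer variable a, coefficients are polynomials in q.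
  Rational functions in a, q are elements of the fraction field.\<close>

type_synonym bipoly = "rat poly poly"
type_synonym ratfun = "bipoly fract"

definition var_a :: bipoly where "var_a = [:0, 1:]"
definition var_q :: bipoly where "var_q = [:[:0, 1:]:]"

definition fa :: ratfun where "fa = Fract var_a 1"
definition fq :: ratfun where "fq = Fract var_q 1"

definition qpoch :: "'a::comm_ring_1 \<Rightarrow> 'a \<Rightarrow> nat \<Rightarrow> 'a" where
  "qpoch y p m = (\<Prod>j<m. 1 - y * p ^ j)"

definition ratfun_cong :: "ratfun \<Rightarrow> ratfun \<Rightarrow> bipoly \<Rightarrow> bool" where
  "ratfun_cong A B P \<longleftrightarrow> (\<exists>C D. D \<noteq> 0 \<and> coprime D P \<and> A - B = Fract (P * C) D)"

end

theory Submission
  imports Defs "HOL-Computational_Algebra.Field_as_Ring"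
begin


lemma qpoch_Suc: "qpoch y p (Suc m) = qpoch y p m * (1 - y * p ^ m)"
  by (simp add: qpoch_def)

lemma qpoch_0[simp]: "qpoch y p 0 = 1"
  by (simp add: qpoch_def)

lemma qpoch_nz:
  fixes y p :: "'a::field"
  assumes "\<And>i. i < m \<Longrightarrow> y * p ^ i \<noteq> 1"
  shows "qpoch y p m \<noteq> 0"
  using assms by (simp add: qpoch_def)

lemma qpoch_pp_nz:
  fixes p :: "'a::field"
  assumes "\<And>i. p ^ Suc i \<noteq> 1"
  shows "qpoch p p m \<noteq> 0"
  using assms by (intro qpoch_nz) (metis power_Suc)

lemma qpoch_zero:
  fixes y p :: "'a::field"
  assumes "j < m" "y * p ^ j = 1"
  shows "qpoch y p m = 0"
  unfolding qpoch_def using assms by (intro prod_zero) auto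

lemma qratio:
  fixes y p :: "'a::field"
  assumes "\<And>i. p ^ Suc i \<noteq> 1"
  shows "qpoch y p (Suc k) / qpoch p p (Suc k) = qpoch y p k / qpoch p p k * ((1 - y * p ^ k) / (1 - p ^ Suc k))"
proof -
  have "1 - p ^ Suc k \<noteq> 0" using assms[of k] by auto
  moreover have "qpoch p p k \<noteq> 0" using qpoch_pp_nz assms by blast
  ultimately show ?thesis by (simp add: qpoch_Suc field_simps)
qed

lemma bracket:
  fixes p x y :: "'a::field"
  assumes xy: "x * y = p"
  shows "(1 - x * p ^ k) * (1 - y * p ^ (k + t)) - (1 - p ^ k) * (1 - p ^ Suc (k + t))
       = p ^ k * ((1 - x) + p ^ t * (p - y))"
proof -
  have "x * p ^ k * (y * p ^ (k + t)) = p ^ k * p^(Suc (k+t))"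
    using xy by (simp add: power_add algebra_simps)
  then show ?thesis by (simp add: algebra_simps power_add)
qed

lemma wz_step:
  fixes p x y :: "'a::field"
  assumes xy: "x * y = p" and pn: "\<And>i. p ^ Suc i \<noteq> 1"
    and D: "(1 - x) + p ^ t * (p - y) \<noteq> 0"
    and z: "qpoch x p (Suc M) * qpoch y p (Suc M + t) = 0"
  shows "(\<Sum>k=0..M. qpoch x p k / qpoch p p k * (qpoch y p (k + Suc t) / qpoch p p (k + Suc t)))
       = (\<Sum>k=0..M. qpoch x p k / qpoch p p k * (qpoch y p (k + t) / qpoch p p (k + t)))"
proof -
  define X where "X k = qpoch x p k / qpoch p p k" for k
  define Y where "Y k = qpoch y p k / qpoch p p k" for k
  define \<mu> where "\<mu> = p ^ t * (p - y) / ((1 - x) + p ^ t * (p - y))"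
  define G where "G k = \<mu> * (1 - p ^ k) * (X k * Y (k + t))" for k
  have XS: "X (Suc k) = X k * ((1 - x * p ^ k) / (1 - p ^ Suc k))" for k
    unfolding X_def by (rule qratio[OF pn])
  have YS: "Y (Suc k) = Y k * ((1 - y * p ^ k) / (1 - p ^ Suc k))" for k
    unfolding Y_def by (rule qratio[OF pn])
  have termeq: "X k * Y (k + Suc t) - X k * Y (k + t) = G (Suc k) - G k" for k
  proof -
    let ?j = "k + t"
    have n1: "1 - p ^ Suc k \<noteq> 0" "1 - p ^ Suc ?j \<noteq> 0" using pn by auto
    have sc: "(1 - y * p ^ ?j) / (1 - p ^ Suc ?j) - 1
        = \<mu> * ((1 - x * p ^ k) * (1 - y * p ^ ?j) / (1 - p ^ Suc ?j) - (1 - p ^ k))"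
    proof -
      have "\<mu> * ((1 - x * p ^ k) * (1 - y * p ^ ?j) / (1 - p ^ Suc ?j) - (1 - p ^ k))
          = \<mu> * (((1 - x * p ^ k) * (1 - y * p ^ ?j) - (1 - p ^ k) * (1 - p ^ Suc ?j)) / (1 - p ^ Suc ?j))"
        using n1 by (simp add: field_simps)
      also have "\<dots> = \<mu> * (p ^ k * ((1 - x) + p ^ t * (p - y)) / (1 - p ^ Suc ?j))"
        by (simp only: bracket[OF xy])
      also have "\<dots> = (\<mu> * ((1 - x) + p ^ t * (p - y))) * p ^ k / (1 - p ^ Suc ?j)"
        by (simp add: algebra_simps)
      also have "\<mu> * ((1 - x) + p ^ t * (p - y)) = p ^ t * (p - y)"
        using D unfolding \<mu>_def by simp
      also have "p ^ t * (p - y) * p ^ k / (1 - p ^ Suc ?j) = p ^ k * p ^ t * (p - y) / (1 - p ^ Suc ?j)"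
        by (simp add: algebra_simps)
      also have "\<dots> = (1 - y * p ^ ?j) / (1 - p ^ Suc ?j) - 1"
        using n1 by (simp add: field_simps power_add)
      finally show ?thesis by simp
    qed
    have "G (Suc k) = \<mu> * (X k * Y ?j) * ((1 - x * p ^ k) * (1 - y * p ^ ?j) / (1 - p ^ Suc ?j))"
    proof -
      have c1: "(1 - p ^ Suc k) * (X k * ((1 - x * p ^ k) / (1 - p ^ Suc k))) = X k * (1 - x * p ^ k)"
        using n1 by simp
      have "G (Suc k) = \<mu> * ((1 - p ^ Suc k) * X (Suc k)) * Y (Suc ?j)"
        unfolding G_def by simp
      also have "(1 - p ^ Suc k) * X (Suc k) = X k * (1 - x * p ^ k)"
        using c1 XS[of k] by simp
      also have "Y (Suc ?j) = Y ?j * ((1 - y * p ^ ?j) / (1 - p ^ Suc ?j))" by (rule YS)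
      finally show ?thesis by (simp add: algebra_simps)
    qed
    moreover have "X k * Y (k + Suc t) = X k * Y ?j * ((1 - y * p ^ ?j) / (1 - p ^ Suc ?j))"
      using YS[of ?j] by simp
    ultimately have "X k * Y (k + Suc t) - X k * Y (k + t) - (G (Suc k) - G k)
       = X k * Y ?j * (((1 - y * p ^ ?j) / (1 - p ^ Suc ?j) - 1)
          - \<mu> * ((1 - x * p ^ k) * (1 - y * p ^ ?j) / (1 - p ^ Suc ?j) - (1 - p ^ k)))"
      unfolding G_def by (simp add: algebra_simps)
    also have "\<dots> = 0" using sc by simp
    finally show ?thesis by simp
  qed
  have "(\<Sum>k=0..M. X k * Y (k + Suc t)) - (\<Sum>k=0..M. X k * Y (k + t))
      = (\<Sum>k=0..M. X k * Y (k + Suc t) - X k * Y (k + t))"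
    by (simp add: sum_subtractf)
  also have "\<dots> = (\<Sum>k=0..M. G (Suc k) - G k)" using termeq by simp
  also have "\<dots> = G (Suc M) - G 0" by (rule sum_Suc_diff) simp
  also have "G (Suc M) = 0" unfolding G_def X_def Y_def using z by simp
  also have "G 0 = 0" unfolding G_def by simp
  finally show ?thesis unfolding X_def Y_def by simp
qed

lemma qpoch_refl:
  fixes p :: "'a::field"
  assumes p0: "p \<noteq> 0"
  shows "qpoch (inverse (p ^ m)) p m = (\<Prod>i<m. - inverse (p ^ Suc i)) * qpoch p p m"
proof -
  have "qpoch (inverse (p ^ m)) p m = (\<Prod>j<m. 1 - inverse (p ^ m) * p ^ j)"
    by (simp add: qpoch_def)
  also have "\<dots> = (\<Prod>i<m. 1 - inverse (p ^ m) * p ^ (m - Suc i))"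
    by (intro prod.reindex_bij_witness[of _ "\<lambda>i. m - Suc i" "\<lambda>i. m - Suc i"]) auto
  also have "\<dots> = (\<Prod>i<m. - inverse (p ^ Suc i) * (1 - p * p ^ i))"
  proof (intro prod.cong refl)
    fix i assume "i \<in> {..<m}"
    then have e: "p ^ m = p ^ (m - Suc i) * p ^ Suc i"
      by (simp only: power_add[symmetric]) simp
    have "inverse (p ^ m) * p ^ (m - Suc i) = inverse (p ^ Suc i)"
      unfolding e using p0 by (simp add: field_simps)
    moreover have "inverse (p ^ Suc i) * (p * p ^ i) = 1" using p0 by (metis power_Suc left_inverse power_not_zero)
    ultimately show "1 - inverse (p ^ m) * p ^ (m - Suc i) = - inverse (p ^ Suc i) * (1 - p * p ^ i)"
      by (simp add: algebra_simps)
  qed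
  also have "\<dots> = (\<Prod>i<m. - inverse (p ^ Suc i)) * qpoch p p m"
    unfolding qpoch_def by (rule prod.distrib)
  finally show ?thesis .
qed

lemma alg: "(1 - p * a) + b * (p - u) = (1 - p * a) * (1 - v)"
    if "b * u = v" "e * v = 1" "a = b * e" for a b e u v p :: "'a::field"
proof -
  have "p * a * v = p * b" using that by (simp add: mult.assoc)
  have "(1 - p * a) * (1 - v) = 1 - p * a - v + p * a * v" by (simp add: algebra_simps)
  also have "\<dots> = 1 - p * a - b * u + p * b" using that \<open>p * a * v = p * b\<close> by simp
  also have "\<dots> = (1 - p * a) + b * (p - u)" by (simp add: algebra_simps)
  finally show ?thesis by simp
qed

lemma alg2: "(1 - u) + b * (p - p * a) = (1 - a) * (p * b - u)" if "a * u = 1" for a b u p :: "'a::field"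
proof -
  have "(1 - a) * (p * b - u) = p*b - u - a * p * b + a * u" by (simp add: algebra_simps)
  also have "\<dots> = (1 - u) + b * (p - p * a)" using that by (simp add: algebra_simps)
  finally show ?thesis by simp
qed

locale qcore =
  fixes p :: "'a::field" and m :: nat
  assumes p0: "p \<noteq> 0" and pn: "\<And>i. p ^ Suc i \<noteq> 1"
begin

definition "A k = qpoch (inverse (p ^ m)) p k / qpoch p p k"
definition "B k = qpoch (p ^ Suc m) p k / qpoch p p k"

lemma A_zero: "m < k \<Longrightarrow> A k = 0"
  unfolding A_def using p0 by (subst qpoch_zero[of m]) auto

lemma V_m: "(\<Sum>k=0..m. B k * A (k + m)) = A m"
proof -
  have "(\<Sum>k=0..m. B k * A (k + m)) = (\<Sum>k\<in>{0}. B k * A (k + m))"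
    by (rule sum.mono_neutral_right) (auto simp: A_zero)
  also have "\<dots> = A m" by (simp add: B_def)
  finally show ?thesis .
qed

lemma V_step:
  assumes "s < m"
  shows "(\<Sum>k=0..m. B k * A (k + Suc s)) = (\<Sum>k=0..m. B k * A (k + s))"
  unfolding A_def B_def
proof (rule wz_step[OF _ pn])
  show "p ^ Suc m * inverse (p ^ m) = p" using p0 by simp
  define d where "d = m - Suc s"
  have d: "m = s + Suc d" using assms unfolding d_def by simp
  have "(1 - p ^ Suc m) + p ^ s * (p - inverse (p ^ m)) = (1 - p * p ^ m) * (1 - inverse (p ^ Suc d))"
  proof -
    have pm: "p ^ m = p ^ s * p ^ Suc d" unfolding d by (simp add: power_add)
    have "p ^ s * inverse (p ^ m) = inverse (p ^ Suc d)" unfolding pm using p0 by simp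
    moreover have "p ^ Suc d * inverse (p ^ Suc d) = 1" by (rule right_inverse) (simp add: p0)
    ultimately show ?thesis using alg[OF _ _ pm, of "inverse (p ^ m)" "inverse (p ^ Suc d)" p] by simp
  qed
  moreover have "1 - p ^ Suc m \<noteq> 0" "1 - inverse (p ^ Suc d) \<noteq> 0" using pn p0
    by (auto simp: field_simps)
  ultimately show "(1 - p ^ Suc m) + p ^ s * (p - inverse (p ^ m)) \<noteq> 0" by simp
  show "qpoch (p ^ Suc m) p (Suc m) * qpoch (inverse (p ^ m)) p (Suc m + s) = 0"
    using p0 by (subst (2) qpoch_zero[of m]) auto
qed


lemma V_const: "s \<le> m \<Longrightarrow> (\<Sum>k=0..m. B k * A (k + s)) = A m"
proof (induction "m - s" arbitrary: s)
  case 0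
  then have "s = m" by simp
  then show ?case using V_m by simp
next
  case (Suc x)
  then have "s < m" by simp
  with Suc.hyps(1)[of "Suc s"] Suc.hyps(2) V_step[of s] show ?case by simp
qed

lemma U_step:
  assumes "0 < m"
  shows "(\<Sum>k=0..m. A k * B (k + Suc s)) = (\<Sum>k=0..m. A k * B (k + s))"
  unfolding A_def B_def
proof (rule wz_step[OF _ pn])
  show "inverse (p ^ m) * p ^ Suc m = p" using p0 by simp
  have "(1 - inverse (p ^ m)) + p ^ s * (p - p ^ Suc m) = (1 - p ^ m) * (p ^ Suc s - inverse (p ^ m))"
    using alg2[of "p ^ m" "inverse (p ^ m)" "p ^ s" p] p0 by simp
  moreover have "1 - p ^ m \<noteq> 0" using pn[of "m - 1"] assms by auto
  moreover have "p ^ Suc s - inverse (p ^ m) \<noteq> 0"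
  proof
    assume "p ^ Suc s - inverse (p ^ m) = 0"
    then have "p ^ Suc s * p ^ m = 1" using p0 by (simp add: field_simps)
    then have "p ^ Suc (s + m) = 1" by (simp add: power_add mult.assoc)
    with pn show False by blast
  qed
  ultimately show "(1 - inverse (p ^ m)) + p ^ s * (p - p ^ Suc m) \<noteq> 0" by simp
  show "qpoch (inverse (p ^ m)) p (Suc m) * qpoch (p ^ Suc m) p (Suc m + s) = 0"
    using p0 by (subst qpoch_zero[of m]) auto
qed

lemma U_const: "s \<le> m \<Longrightarrow> (\<Sum>k=0..m. A k * B (k + s)) = A m"
proof (induction s)
  case 0
  have "(\<Sum>k=0..m. A k * B (k + 0)) = (\<Sum>k=0..m. B k * A (k + 0))"
    by (simp add: mult.commute)
  then show ?case using V_const[of 0] by simp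
next
  case (Suc s)
  then show ?case using U_step[of s] by simp
qed

lemma A_m: "A m = (\<Prod>i<m. - inverse (p ^ Suc i))"
  unfolding A_def using qpoch_refl[OF p0, of m] qpoch_pp_nz[OF pn, of m] by simp

end



definition ev :: "rat poly fract \<Rightarrow> bipoly \<Rightarrow> rat poly fract" where
  "ev r N = poly (fract_poly N) r"

lemma ev_mult[simp]: "ev r (M * N) = ev r M * ev r N"
  by (simp add: ev_def)
lemma ev_add[simp]: "ev r (M + N) = ev r M + ev r N"
  by (simp add: ev_def)
lemma ev_diff[simp]: "ev r (M - N) = ev r M - ev r N"
  by (simp add: ev_def)
lemma ev_one[simp]: "ev r 1 = 1"
  by (simp add: ev_def)
lemma ev_const[simp]: "ev r [:c:] = to_fract c"
  by (cases "c = 0") (simp_all add: ev_def map_poly_pCons)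
lemma ev_zero[simp]: "ev r 0 = 0"
  by (simp add: ev_def)
lemma ev_uminus[simp]: "ev r (- N) = - ev r N"
  using ev_diff[of r 0 N] by simp

lemma const_dvd_unit_aux:
  fixes d f :: bipoly
  assumes "e \<noteq> 0" "d dvd [:e:]" "d dvd f" "coeff f i = 1"
  shows "is_unit d"
proof -
  have "degree d \<le> degree [:e:]" using assms(1,2) by (intro dvd_imp_degree_le) auto
  then have "degree d = 0" by simp
  then have dd: "d = [:coeff d 0:]" using degree_0_id by metis
  have "coeff d 0 dvd coeff f i" using assms(3) dd const_poly_dvd_iff by metis
  then have "coeff d 0 dvd 1" using assms(4) by simp
  then show ?thesis using dd is_unit_const_poly_iff by metis
qed

lemma coprime_const_poly:
  fixes f :: bipoly
  assumes "e \<noteq> 0" "coeff f i = 1"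
  shows "coprime [:e:] f"
  using assms const_dvd_unit_aux by (intro coprimeI) blast

locale goodloc =
  fixes P :: bipoly and Rs :: "rat poly fract set"
begin

definition "S = {D. D \<noteq> 0 \<and> coprime D P \<and> (\<forall>r\<in>Rs. ev r D \<noteq> 0)}"

definition "good X f \<longleftrightarrow> (\<exists>N D. D \<in> S \<and> X = Fract N D \<and> (\<forall>r\<in>Rs. f r = ev r N / ev r D))"

definition "ugood X f \<longleftrightarrow> (\<exists>N D. N \<in> S \<and> D \<in> S \<and> X = Fract N D \<and> (\<forall>r\<in>Rs. f r = ev r N / ev r D))"

lemma S_mult: "D1 \<in> S \<Longrightarrow> D2 \<in> S \<Longrightarrow> D1 * D2 \<in> S"
  unfolding S_def by auto

lemma S_one: "1 \<in> S"
  unfolding S_def by auto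

lemma good_const: "good (Fract N 1) (\<lambda>r. ev r N)"
  unfolding good_def using S_one by fastforce

lemma good_one: "good 1 (\<lambda>r. 1)"
  using good_const[of 1] by (simp add: One_fract_def)

lemma ugood_good: "ugood X f \<Longrightarrow> good X f"
  unfolding ugood_def good_def by blast

lemma ugood_const: "N \<in> S \<Longrightarrow> ugood (Fract N 1) (\<lambda>r. ev r N)"
  unfolding ugood_def using S_one by fastforce

lemma good_add:
  assumes "good X f" "good Y g" shows "good (X + Y) (\<lambda>r. f r + g r)"
proof -
  obtain N1 D1 where 1: "D1 \<in> S" "X = Fract N1 D1" "\<forall>r\<in>Rs. f r = ev r N1 / ev r D1"
    using assms(1) unfolding good_def by blast
  obtain N2 D2 where 2: "D2 \<in> S" "Y = Fract N2 D2" "\<forall>r\<in>Rs. g r = ev r N2 / ev r D2"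
    using assms(2) unfolding good_def by blast
  have n: "D1 \<noteq> 0" "D2 \<noteq> 0" "\<forall>r\<in>Rs. ev r D1 \<noteq> 0" "\<forall>r\<in>Rs. ev r D2 \<noteq> 0"
    using 1(1) 2(1) unfolding S_def by auto
  show ?thesis unfolding good_def
  proof (intro exI conjI)
    show "D1 * D2 \<in> S" using 1 2 S_mult by blast
    show "X + Y = Fract (N1 * D2 + N2 * D1) (D1 * D2)" using 1 2 n by simp
    show "\<forall>r\<in>Rs. f r + g r = ev r (N1 * D2 + N2 * D1) / ev r (D1 * D2)"
      using 1 2 n by (simp add: field_simps)
  qed
qed

lemma good_mult:
  assumes "good X f" "good Y g" shows "good (X * Y) (\<lambda>r. f r * g r)"
proof -
  obtain N1 D1 where 1: "D1 \<in> S" "X = Fract N1 D1" "\<forall>r\<in>Rs. f r = ev r N1 / ev r D1"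
    using assms(1) unfolding good_def by blast
  obtain N2 D2 where 2: "D2 \<in> S" "Y = Fract N2 D2" "\<forall>r\<in>Rs. g r = ev r N2 / ev r D2"
    using assms(2) unfolding good_def by blast
  show ?thesis unfolding good_def
  proof (intro exI conjI)
    show "D1 * D2 \<in> S" using 1 2 S_mult by blast
    show "X * Y = Fract (N1 * N2) (D1 * D2)" using 1 2 by simp
    show "\<forall>r\<in>Rs. f r * g r = ev r (N1 * N2) / ev r (D1 * D2)"
      using 1 2 by simp
  qed
qed

lemma ugood_mult:
  assumes "ugood X f" "ugood Y g" shows "ugood (X * Y) (\<lambda>r. f r * g r)"
proof -
  obtain N1 D1 where 1: "N1 \<in> S" "D1 \<in> S" "X = Fract N1 D1" "\<forall>r\<in>Rs. f r = ev r N1 / ev r D1"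
    using assms(1) unfolding ugood_def by blast
  obtain N2 D2 where 2: "N2 \<in> S" "D2 \<in> S" "Y = Fract N2 D2" "\<forall>r\<in>Rs. g r = ev r N2 / ev r D2"
    using assms(2) unfolding ugood_def by blast
  show ?thesis unfolding ugood_def
  proof (intro exI conjI)
    show "N1 * N2 \<in> S" "D1 * D2 \<in> S" using 1 2 S_mult by blast+
    show "X * Y = Fract (N1 * N2) (D1 * D2)" using 1 2 by simp
    show "\<forall>r\<in>Rs. f r * g r = ev r (N1 * N2) / ev r (D1 * D2)"
      using 1 2 by simp
  qed
qed

lemma ugood_inverse:
  assumes "ugood X f" shows "ugood (inverse X) (\<lambda>r. inverse (f r))"
proof -
  obtain N1 D1 where 1: "N1 \<in> S" "D1 \<in> S" "X = Fract N1 D1" "\<forall>r\<in>Rs. f r = ev r N1 / ev r D1"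
    using assms(1) unfolding ugood_def by blast
  show ?thesis unfolding ugood_def
  proof (intro exI conjI)
    show "D1 \<in> S" using 1 by blast
    show "N1 \<in> S" using 1 by blast
    show "inverse X = Fract D1 N1" using 1 by simp
    show "\<forall>r\<in>Rs. inverse (f r) = ev r D1 / ev r N1"
      using 1 by simp
  qed
qed

lemma good_uminus:
  assumes "good X f" shows "good (- X) (\<lambda>r. - f r)"
proof -
  obtain N1 D1 where 1: "D1 \<in> S" "X = Fract N1 D1" "\<forall>r\<in>Rs. f r = ev r N1 / ev r D1"
    using assms(1) unfolding good_def by blast
  show ?thesis unfolding good_def
  proof (intro exI conjI)
    show "D1 \<in> S" using 1 by blast
    show "- X = Fract (- N1) D1" using 1 by simp
    show "\<forall>r\<in>Rs. - f r = ev r (- N1) / ev r D1"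
      using 1 by simp
  qed
qed

lemma good_diff:
  assumes "good X f" "good Y g" shows "good (X - Y) (\<lambda>r. f r - g r)"
  using good_add[OF assms(1) good_uminus[OF assms(2)]] by simp

lemma good_divide:
  assumes "good X f" "ugood Y g" shows "good (X / Y) (\<lambda>r. f r / g r)"
  using good_mult[OF assms(1) ugood_good[OF ugood_inverse[OF assms(2)]]]
  by (simp add: divide_inverse)

lemma good_sum:
  assumes "finite A" "\<And>k. k \<in> A \<Longrightarrow> good (X k) (f k)"
  shows "good (\<Sum>k\<in>A. X k) (\<lambda>r. \<Sum>k\<in>A. f k r)"
  using assms
proof (induction A rule: finite_induct)
  case empty
  then show ?case using good_const[of 0] by (simp add: Zero_fract_def ev_def)
next
  case (insert x F)
  then show ?case using good_add[of "X x" "f x" "\<Sum>k\<in>F. X k"] by simp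
qed

lemma good_prod:
  assumes "finite A" "\<And>k. k \<in> A \<Longrightarrow> good (X k) (f k)"
  shows "good (\<Prod>k\<in>A. X k) (\<lambda>r. \<Prod>k\<in>A. f k r)"
  using assms
proof (induction A rule: finite_induct)
  case empty
  then show ?case using good_one by simp
next
  case (insert x F)
  then show ?case using good_mult[of "X x" "f x" "\<Prod>k\<in>F. X k"] by simp
qed

lemma ugood_prod:
  assumes "finite A" "\<And>k. k \<in> A \<Longrightarrow> ugood (X k) (f k)"
  shows "ugood (\<Prod>k\<in>A. X k) (\<lambda>r. \<Prod>k\<in>A. f k r)"
  using assms
proof (induction A rule: finite_induct)
  case empty
  then show ?case using ugood_const[OF S_one] by (simp add: One_fract_def)
next
  case (insert x F)
  then show ?case using ugood_mult[of "X x" "f x" "\<Prod>k\<in>F. X k"] by simp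
qed

lemma good_power: "good X f \<Longrightarrow> good (X ^ k) (\<lambda>r. f r ^ k)"
  using good_prod[of "{..<k}" "\<lambda>_. X" "\<lambda>_. f"] by simp

lemma ugood_power: "ugood X f \<Longrightarrow> ugood (X ^ k) (\<lambda>r. f r ^ k)"
  using ugood_prod[of "{..<k}" "\<lambda>_. X" "\<lambda>_. f"] by simp

lemma good_powi: "ugood X f \<Longrightarrow> good (X powi e) (\<lambda>r. f r powi e)"
  unfolding power_int_def
  using good_power[OF ugood_good] good_power[OF ugood_good[OF ugood_inverse]]
  by auto

lemma good_qpoch:
  assumes "good X f" "good Y g"
  shows "good (qpoch X Y k) (\<lambda>r. qpoch (f r) (g r) k)"
  unfolding qpoch_def
  by (intro good_prod good_diff good_one good_mult good_power assms) simp

end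



definition xq :: "rat poly" where "xq = [:0, 1:]"
definition QQ :: "rat poly fract" where "QQ = to_fract xq"

lemma to_fract_power: "to_fract (a ^ k) = to_fract a ^ k"
  by (induction k) simp_all

lemma Fract_power1: "Fract a 1 ^ k = Fract (a ^ k) 1"
  by (induction k) (simp_all add: One_fract_def)

lemma xq_pow_ne1: "k > 0 \<Longrightarrow> xq ^ k \<noteq> 1"
proof
  assume "k > 0" "xq ^ k = 1"
  then have "degree (xq ^ k) = 0" by simp
  moreover have "degree (xq ^ k) = k" unfolding xq_def using degree_linear_power[of 0 k] by simp
  ultimately show False using \<open>k > 0\<close> by simp
qed

lemma xq_ne0: "xq \<noteq> 0" by (simp add: xq_def)

lemma QQ_ne0: "QQ \<noteq> 0" by (simp add: QQ_def xq_ne0)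

lemma QQ_pow_ne1: "k > 0 \<Longrightarrow> QQ ^ k \<noteq> 1"
  using xq_pow_ne1[of k] unfolding QQ_def to_fract_power[symmetric]
  by (metis to_fract_1 to_fract_eq_iff)

lemma var_q_eq: "var_q = [:xq:]" by (simp add: var_q_def xq_def)

lemma var_q_pow: "var_q ^ k = [:xq ^ k:]"
  by (simp add: var_q_eq poly_const_pow)

lemma ev_var_a[simp]: "ev r var_a = r"
  by (simp add: ev_def var_a_def map_poly_pCons)

lemma ev_var_q[simp]: "ev r var_q = QQ"
  by (simp add: var_q_eq QQ_def)

lemma fa_eq: "fa = Fract var_a 1" by (simp add: fa_def)
lemma fq_eq: "fq = Fract var_q 1" by (simp add: fq_def)

lemma coeff_f1: "coeff (1 - var_a * var_q ^ n) 0 = 1"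
  by (simp add: var_a_def var_q_pow)
lemma coeff_f2: "coeff (var_a - var_q ^ n) 1 = 1"
  by (simp add: var_a_def var_q_pow)

lemma coprime_var_a_f1: "coprime var_a (1 - var_a * w)"
proof (rule coprimeI)
  fix d assume d: "d dvd var_a" "d dvd 1 - var_a * w"
  then have "d dvd var_a * w" by simp
  with d(2) have "d dvd (1 - var_a * w) + var_a * w" by (rule dvd_add)
  then show "is_unit d" by simp
qed

lemma coprime_var_a_f2: "coprime var_a (var_a - var_q ^ n)"
proof (rule coprimeI)
  fix d assume d: "d dvd var_a" "d dvd var_a - var_q ^ n"
  then have "d dvd var_a - (var_a - var_q ^ n)" by (rule dvd_diff)
  then have "d dvd [:xq ^ n:]" by (simp add: var_q_pow)
  moreover have "coeff var_a 1 = 1" by (simp add: var_a_def)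
  ultimately show "is_unit d" using const_dvd_unit_aux[of "xq ^ n" d var_a 1] d(1) xq_ne0 by simp
qed



lemma prod_neg_inv:
  fixes z :: "'a::field"
  assumes z: "z \<noteq> 0"
  shows "(\<Prod>i<m. - inverse ((z ^ 2) ^ Suc i)) = (-1) ^ m * inverse (z ^ (m * (m + 1)))"
proof (induction m)
  case 0
  then show ?case by simp
next
  case (Suc m)
  have e: "z ^ (m * (m + 1)) * (z ^ 2) ^ Suc m = z ^ (Suc m * (Suc m + 1))"
  proof -
    have "z ^ (m * (m + 1)) * (z ^ 2) ^ Suc m = z ^ (m * (m + 1) + 2 * Suc m)"
      by (simp only: power_add power_mult)
    also have "m * (m + 1) + 2 * Suc m = Suc m * (Suc m + 1)" by (simp add: algebra_simps)
    finally show ?thesis .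
  qed
  have "(\<Prod>i<Suc m. - inverse ((z ^ 2) ^ Suc i))
      = (-1) ^ m * inverse (z ^ (m * (m + 1))) * (- inverse ((z ^ 2) ^ Suc m))"
    using Suc.IH by simp
  also have "\<dots> = (-1) ^ Suc m * inverse (z ^ (m * (m + 1)) * (z ^ 2) ^ Suc m)"
    by (simp add: inverse_mult_distrib)
  also have "\<dots> = (-1) ^ Suc m * inverse (z ^ (Suc m * (Suc m + 1)))" by (simp only: e)
  finally show ?case .
qed

lemma qpoch_term:
  fixes p x y :: "'a::field"
  shows "qpoch x p k * qpoch y p (k + s) / (qpoch p p k * qpoch p p (k + s))
       = qpoch x p k / qpoch p p k * (qpoch y p (k + s) / qpoch p p (k + s))"
  by simp

lemma exponent_eq:
  fixes n m :: nat
  assumes "n = 2 * m + 1"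
  shows "(1 - int n ^ 2) div 4 = - int (m * (m + 1))"
proof -
  have "1 - int n ^ 2 = 4 * (- int (m * (m + 1)))"
    using assms by (simp add: power2_eq_square algebra_simps)
  then show ?thesis by simp
qed



lemma one_minus_const: "(1::'a::comm_ring_1 poly) - [:c:] = [:1 - c:]"
  by (auto simp: poly_eq_iff coeff_pCons split: nat.split)

theorem theorem4p4:
  fixes n s :: nat
  assumes "odd n" and "n > 0" and "s \<le> (n - 1) div 2"
  shows "ratfun_cong
    (\<Sum>k=0..(n - 1) div 2.
       (qpoch (fa * fq) (fq ^ 2) k * qpoch (fq / fa) (fq ^ 2) (k + s)) /
       (qpoch (fq ^ 2) (fq ^ 2) k * qpoch (fq ^ 2) (fq ^ 2) (k + s)))
    ((-1) ^ ((n - 1) div 2) * fq powi ((1 - int n ^ 2) div 4))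
    ((1 - var_a * var_q ^ n) * (var_a - var_q ^ n))"
proof -
  define m where "m = (n - 1) div 2"
  have nm: "n = 2 * m + 1" using assms(1) unfolding m_def by (auto elim!: oddE)
  have sm: "s \<le> m" using assms(3) unfolding m_def .
  define P where "P = (1 - var_a * var_q ^ n) * (var_a - var_q ^ n)"
  define \<alpha> where "\<alpha> = QQ ^ n"
  define \<beta> where "\<beta> = inverse \<alpha>"
  define Rs where "Rs = {\<alpha>, \<beta>}"
  interpret G: goodloc P Rs .
  have \<alpha>0: "\<alpha> \<noteq> 0" unfolding \<alpha>_def using QQ_ne0 by simp
  have \<beta>0: "\<beta> \<noteq> 0" unfolding \<beta>_def using \<alpha>0 by simp
  have Rs0: "r \<in> Rs \<Longrightarrow> r \<noteq> 0" for r using \<alpha>0 \<beta>0 unfolding Rs_def by auto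
  have ab: "\<alpha> \<noteq> \<beta>"
  proof
    assume "\<alpha> = \<beta>"
    then have "\<alpha> * \<alpha> = 1" using \<alpha>0 unfolding \<beta>_def by (metis right_inverse)
    then have "QQ ^ (n + n) = 1" unfolding \<alpha>_def by (simp add: power_add)
    then show False using QQ_pow_ne1[of "n + n"] assms(2) by simp
  qed
  have constS: "[:c:] \<in> G.S" if "c \<noteq> 0" for c
    unfolding G.S_def unfolding P_def using that coprime_const_poly[OF that coeff_f1[of n]]
      coprime_const_poly[OF that coeff_f2[of n]] by simp
  have var_a_ne0: "var_a \<noteq> 0" by (simp add: var_a_def)
  have aS: "var_a \<in> G.S"
    unfolding G.S_def unfolding P_def using coprime_var_a_f1[of "var_q ^ n"] coprime_var_a_f2[of n] Rs0
      var_a_ne0 by auto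
  have ga: "G.ugood fa (\<lambda>r. r)"
    using G.ugood_const[OF aS] fa_eq by simp
  have gq: "G.ugood fq (\<lambda>r. QQ)"
    using G.ugood_const[OF constS[OF xq_ne0]] fq_eq var_q_eq by simp
  have gpp: "G.ugood (qpoch (fq ^ 2) (fq ^ 2) k) (\<lambda>r. qpoch (QQ ^ 2) (QQ ^ 2) k)" for k
    unfolding qpoch_def
  proof (rule G.ugood_prod)
    fix j assume "j \<in> {..<k}"
    have ne: "1 - xq ^ (2 + 2 * j) \<noteq> 0" using xq_pow_ne1[of "2 + 2 * j"] by simp
    have eq1: "1 - fq ^ 2 * (fq ^ 2) ^ j = Fract [:1 - xq ^ (2 + 2 * j):] 1"
    proof -
      have "fq ^ 2 * (fq ^ 2) ^ j = fq ^ (2 + 2 * j)" by (simp only: power_add power_mult)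
      also have "\<dots> = Fract (var_q ^ (2 + 2 * j)) 1" by (simp add: fq_eq Fract_power1)
      finally have "1 - fq ^ 2 * (fq ^ 2) ^ j = Fract (1 - var_q ^ (2 + 2 * j)) 1"
        by (simp add: One_fract_def)
      also have "1 - var_q ^ (2 + 2 * j) = [:1 - xq ^ (2 + 2 * j):]"
        by (simp only: var_q_pow one_minus_const)
      finally show ?thesis .
    qed
    have ev1: "ev r [:1 - xq ^ (2 + 2 * j):] = 1 - QQ ^ 2 * (QQ ^ 2) ^ j" for r
      by (simp only: ev_const to_fract_diff to_fract_1 to_fract_mult to_fract_power QQ_def[symmetric] power_add power_mult)
    show "G.ugood (1 - fq ^ 2 * (fq ^ 2) ^ j) (\<lambda>r. 1 - QQ ^ 2 * (QQ ^ 2) ^ j)"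
      using G.ugood_const[OF constS[OF ne]] unfolding eq1 ev1 .
  qed simp
  define LK where "LK r = (\<Sum>k=0..m. (qpoch (r * QQ) (QQ ^ 2) k * qpoch (QQ / r) (QQ ^ 2) (k + s)) /
       (qpoch (QQ ^ 2) (QQ ^ 2) k * qpoch (QQ ^ 2) (QQ ^ 2) (k + s)))" for r
  define e where "e = (1 - int n ^ 2) div 4"
  define RK where "RK = (-1) ^ m * QQ powi e"
  have gL: "G.good (\<Sum>k=0..m.
       (qpoch (fa * fq) (fq ^ 2) k * qpoch (fq / fa) (fq ^ 2) (k + s)) /
       (qpoch (fq ^ 2) (fq ^ 2) k * qpoch (fq ^ 2) (fq ^ 2) (k + s))) LK"
    unfolding LK_def
  proof (rule G.good_sum)
    fix k
    have g1: "G.good (qpoch (fa * fq) (fq ^ 2) k) (\<lambda>r. qpoch (r * QQ) (QQ ^ 2) k)"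
      using G.good_qpoch[OF G.good_mult[OF G.ugood_good[OF ga] G.ugood_good[OF gq]]
          G.good_power[OF G.ugood_good[OF gq]]] by simp
    have g2: "G.good (qpoch (fq / fa) (fq ^ 2) (k + s)) (\<lambda>r. qpoch (QQ / r) (QQ ^ 2) (k + s))"
      using G.good_qpoch[OF G.good_divide[OF G.ugood_good[OF gq] ga]
          G.good_power[OF G.ugood_good[OF gq]]] by simp
    show "G.good ((qpoch (fa * fq) (fq ^ 2) k * qpoch (fq / fa) (fq ^ 2) (k + s)) /
       (qpoch (fq ^ 2) (fq ^ 2) k * qpoch (fq ^ 2) (fq ^ 2) (k + s)))
      (\<lambda>r. (qpoch (r * QQ) (QQ ^ 2) k * qpoch (QQ / r) (QQ ^ 2) (k + s)) /
       (qpoch (QQ ^ 2) (QQ ^ 2) k * qpoch (QQ ^ 2) (QQ ^ 2) (k + s)))"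
      using G.good_divide[OF G.good_mult[OF g1 g2] G.ugood_mult[OF gpp gpp]] by simp
  qed simp
  have gR: "G.good ((-1) ^ m * fq powi e) (\<lambda>r. RK)"
    unfolding RK_def
    using G.good_mult[OF G.good_power[OF G.good_uminus[OF G.good_one]] G.good_powi[OF gq]]
    by simp
  have gE: "G.good ((\<Sum>k=0..m.
       (qpoch (fa * fq) (fq ^ 2) k * qpoch (fq / fa) (fq ^ 2) (k + s)) /
       (qpoch (fq ^ 2) (fq ^ 2) k * qpoch (fq ^ 2) (fq ^ 2) (k + s))) - (-1) ^ m * fq powi e)
      (\<lambda>r. LK r - RK)"
    using G.good_diff[OF gL gR] .
  have core: "LK r = RK" if "r \<in> Rs" for r
  proof -
    have p0: "QQ ^ 2 \<noteq> 0" using QQ_ne0 by simp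
    have pn: "(QQ ^ 2) ^ Suc i \<noteq> 1" for i
    proof -
      have "QQ ^ (2 * Suc i) \<noteq> 1" by (rule QQ_pow_ne1) simp
      then show ?thesis by (metis power_mult)
    qed
    interpret C: qcore "QQ ^ 2" m using p0 pn by unfold_locales auto
    have Am: "C.A m = (-1) ^ m * inverse (QQ ^ (m * (m + 1)))"
      using C.A_m prod_neg_inv[OF QQ_ne0] by simp
    have RKeq: "RK = (-1) ^ m * inverse (QQ ^ (m * (m + 1)))"
      unfolding RK_def e_def exponent_eq[OF nm] power_int_minus power_int_of_nat ..
    have Qn: "QQ ^ n = (QQ ^ 2) ^ m * QQ" unfolding nm by (simp add: power_add power_mult)
    have pm0: "(QQ ^ 2) ^ m \<noteq> 0" using p0 by simp
    show ?thesis
    proof (cases "r = \<beta>")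
      case True
      have e1: "r * QQ = inverse ((QQ ^ 2) ^ m)"
        unfolding True \<beta>_def \<alpha>_def Qn using QQ_ne0 pm0 by (simp add: inverse_mult_distrib)
      have e2: "QQ / r = (QQ ^ 2) ^ Suc m"
      proof -
        have "QQ / r = QQ * ((QQ ^ 2) ^ m * QQ)"
          unfolding True \<beta>_def \<alpha>_def Qn by (simp only: divide_inverse inverse_inverse_eq)
        also have "\<dots> = (QQ ^ 2) ^ Suc m" by (simp add: power2_eq_square algebra_simps)
        finally show ?thesis .
      qed
      have "LK r = (\<Sum>k=0..m. C.A k * C.B (k + s))"
        unfolding LK_def e1 e2 C.A_def C.B_def qpoch_term ..
      also have "\<dots> = C.A m" by (rule C.U_const[OF sm])
      finally show ?thesis using Am RKeq by simp
    next
      case False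
      then have T: "r = \<alpha>" using that unfolding Rs_def by auto
      have e1: "r * QQ = (QQ ^ 2) ^ Suc m"
        unfolding T \<alpha>_def Qn by (simp add: power2_eq_square algebra_simps)
      have e2: "QQ / r = inverse ((QQ ^ 2) ^ m)"
        unfolding T \<alpha>_def Qn using QQ_ne0 pm0 by (simp add: field_simps)
      have "LK r = (\<Sum>k=0..m. C.B k * C.A (k + s))"
        unfolding LK_def e1 e2 C.A_def C.B_def qpoch_term ..
      also have "\<dots> = C.A m" by (rule C.V_const[OF sm])
      finally show ?thesis using Am RKeq by simp
    qed
  qed
  obtain N D where ND: "D \<in> G.S" "(\<Sum>k=0..m.
       (qpoch (fa * fq) (fq ^ 2) k * qpoch (fq / fa) (fq ^ 2) (k + s)) /
       (qpoch (fq ^ 2) (fq ^ 2) k * qpoch (fq ^ 2) (fq ^ 2) (k + s))) - (-1) ^ m * fq powi e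
       = Fract N D" "\<forall>r\<in>Rs. LK r - RK = ev r N / ev r D"
    using gE unfolding G.good_def by blast
  have evN: "ev r N = 0" if "r \<in> Rs" for r
  proof -
    have "ev r D \<noteq> 0" using ND(1) that unfolding G.S_def by blast
    moreover have "ev r N / ev r D = 0" using ND(3) core that by simp
    ultimately show ?thesis by simp
  qed
  have PN: "P dvd N"
  proof -
    have f2eq: "var_a - var_q ^ n = [:- (xq ^ n), 1:]"
      by (simp add: var_a_def var_q_pow)
    have f1eq: "1 - var_a * var_q ^ n = [:1, - (xq ^ n):]"
      by (simp add: var_a_def var_q_pow one_pCons)
    have tf: "to_fract (xq ^ n) = \<alpha>" unfolding \<alpha>_def QQ_def by (rule to_fract_power)
    have fP: "fract_poly P = smult (- \<alpha>) ([:- \<beta>, 1:] * [:- \<alpha>, 1:])"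
    proof -
      have "fract_poly P = [:1, - \<alpha>:] * [:- \<alpha>, 1:]"
        unfolding P_def f1eq f2eq by (simp add: map_poly_pCons tf)
      also have "[:1, - \<alpha>:] = smult (- \<alpha>) [:- \<beta>, 1:]"
        using \<alpha>0 unfolding \<beta>_def by simp
      finally show ?thesis by (simp only: mult_smult_left)
    qed
    define N' where "N' = fract_poly N"
    have Na: "poly N' \<alpha> = 0" "poly N' \<beta> = 0"
      using evN unfolding N'_def ev_def Rs_def by auto
    from Na(1) have "[:- \<alpha>, 1:] dvd N'" by (simp add: poly_eq_0_iff_dvd)
    then obtain M where M: "N' = [:- \<alpha>, 1:] * M" by (elim dvdE)
    have "(\<beta> - \<alpha>) * poly M \<beta> = 0" using Na(2) M by (simp, blast)
    then have "poly M \<beta> = 0" using ab by simp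
    then have "[:- \<beta>, 1:] dvd M" by (simp add: poly_eq_0_iff_dvd)
    then have "[:- \<beta>, 1:] * [:- \<alpha>, 1:] dvd N'" unfolding M
      by (metis mult.commute mult_dvd_mono dvd_refl)
    then have "fract_poly P dvd fract_poly N" unfolding fP N'_def
      using \<alpha>0 by (intro smult_dvd) auto
    moreover have "content P = 1"
    proof -
      have c1: "content (1 - var_a * var_q ^ n) = 1"
        using content_dvd_coeff[of "1 - var_a * var_q ^ n" 0] coeff_f1[of n]
        by (metis normalize_content is_unit_normalize)
      have c2: "content (var_a - var_q ^ n) = 1"
        using content_dvd_coeff[of "var_a - var_q ^ n" 1] coeff_f2[of n]
        by (metis normalize_content is_unit_normalize)
      show ?thesis unfolding P_def content_mult c1 c2 by simp
    qed
    ultimately show ?thesis by (rule fract_poly_dvdD)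
  qed
  then obtain C where C: "N = P * C" by (elim dvdE)
  show ?thesis
    unfolding ratfun_cong_def
  proof (intro exI conjI)
    show "D \<noteq> 0" "coprime D ((1 - var_a * var_q ^ n) * (var_a - var_q ^ n))"
      using ND(1) unfolding G.S_def unfolding P_def by auto
    show "(\<Sum>k = 0..(n - 1) div 2. qpoch (fa * fq) (fq\<^sup>2) k * qpoch (fq / fa) (fq\<^sup>2) (k + s) /
          (qpoch (fq\<^sup>2) (fq\<^sup>2) k * qpoch (fq\<^sup>2) (fq\<^sup>2) (k + s))) -
          (- 1) ^ ((n - 1) div 2) * fq powi ((1 - int n ^ 2) div 4) =
          Fract ((1 - var_a * var_q ^ n) * (var_a - var_q ^ n) * C) D"
      using ND(2) C unfolding P_def e_def m_def by simp
  qed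
qed

end
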